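(* Let $x$ be a positive integer. Then both $6x-1$ and $6x+1$ are prime if and only if there is no prime $p \geq 5$ with $p < 6x-1$ such that $x \equiv -\kappa(p) \pmod{p}$ or $x \equiv +\kappa(p) \pmod{p}$.
   Context: For a prime $p \geq 5$ define $\kappa(p) = \frac{p+1}{6}$ if $p \equiv -1 \pmod 6$ and $\kappa(p) = \frac{p-1}{6}$ if $p \equiv +1 \pmod 6$ (so $p = 6\kappa(p) \mp 1$ is an integer of the form $6k\pm 1$ with $k=\kappa(p)$). *)

theory Defs
  imports "HOL-Number_Theory.Number_Theory"
begin

definition kappa :: "nat \<Rightarrow> nat" where
  "kappa p = (if p mod 6 = 5 then (p + 1) div 6 else (p - 1) div 6)"

end

theory Submission
  imports Defs
begin

lemma p_mod6:
  fixes p :: nat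
  assumes "prime p" "5 \<le> p"
  shows "p mod 6 = 1 \<or> p mod 6 = 5"
proof -
  have "\<not> 2 dvd p"
  proof
    assume "2 dvd p" then have "2 = p" using assms(1) prime_nat_iff by (metis numeral_One numeral_eq_iff semiring_norm(85))
    then show False using assms by simp
  qed
  moreover have "\<not> 3 dvd p"
  proof
    assume "3 dvd p" then have "3 = p" using assms(1) prime_nat_iff by (metis numeral_One numeral_eq_iff semiring_norm(86))
    then show False using assms by simp
  qed
  ultimately show ?thesis by presburger
qed

lemma six_cancel:
  fixes p :: nat and y :: int
  assumes "prime p" "5 \<le> p"
  shows "int p dvd 6 * y \<longleftrightarrow> int p dvd y"
proof -
  have "\<not> p dvd 6"
  proof
    assume "p dvd 6"
    then have "p \<le> 6" by (simp add: dvd_imp_le)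
    with assms \<open>p dvd 6\<close> have "p = 5 \<or> p = 6" by auto
    then show False using \<open>p dvd 6\<close> assms(1) by auto
  qed
  then have "coprime p 6" using assms(1) prime_imp_coprime by blast
  then have "coprime (int p) 6" by (metis coprime_int_iff of_nat_numeral)
  then show ?thesis using coprime_dvd_mult_right_iff by blast
qed

lemma dvd_shift:
  fixes a b :: int
  shows "(b dvd a + b) = (b dvd a)" and "(b dvd a - b) = (b dvd a)"
  by (simp_all add: dvd_add_left_iff dvd_diff_left_iff)

lemma key:
  fixes p x :: nat
  assumes "prime p" "5 \<le> p"
  shows "(int p dvd 6 * int x - 1 \<or> int p dvd 6 * int x + 1) \<longleftrightarrow>
     ([int x = - int (kappa p)] (mod int p) \<or> [int x = int (kappa p)] (mod int p))"
proof -
  define k where "k = int (kappa p)"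
  have c1: "[int x = - k] (mod int p) \<longleftrightarrow> int p dvd 6 * (int x + k)"
    using six_cancel[OF assms, of "int x + k"] cong_iff_dvd_diff[of "int x" "-k" "int p"] by simp
  have c2: "[int x = k] (mod int p) \<longleftrightarrow> int p dvd 6 * (int x - k)"
    using six_cancel[OF assms, of "int x - k"] cong_iff_dvd_diff[of "int x" "k" "int p"] by simp
  from p_mod6[OF assms] show ?thesis
  proof
    assume h: "p mod 6 = 1"
    have "p = 6 * (p div 6) + p mod 6" by simp
    then have "p = 6 * (p div 6) + 1" using h by simp
    then have "6 * ((p - 1) div 6) = p - 1" by (metis diff_add_inverse2 nonzero_mult_div_cancel_left zero_neq_numeral)
    then have "6 * kappa p = p - 1" unfolding kappa_def using h by simp
    then have "6 * k = int p - 1" unfolding k_def using assms(2) by (simp add: of_nat_diff flip: of_nat_mult)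
    then have e1: "6 * (int x + k) = (6 * int x - 1) + int p" and e2: "6 * (int x - k) = (6 * int x + 1) - int p"
      by (simp_all add: algebra_simps)
    have "int p dvd 6 * (int x + k) \<longleftrightarrow> int p dvd 6 * int x - 1" unfolding e1 by (rule dvd_shift(1))
    moreover have "int p dvd 6 * (int x - k) \<longleftrightarrow> int p dvd 6 * int x + 1" unfolding e2 by (rule dvd_shift(2))
    ultimately show ?thesis using c1 c2 unfolding k_def by blast
  next
    assume h: "p mod 6 = 5"
    have "p = 6 * (p div 6) + p mod 6" by simp
    then have "p + 1 = 6 * (p div 6 + 1)" using h by simp
    then have "6 * ((p + 1) div 6) = p + 1" by (metis nonzero_mult_div_cancel_left zero_neq_numeral)
    then have "6 * kappa p = p + 1" unfolding kappa_def using h by simp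
    then have "6 * k = int p + 1" unfolding k_def by (simp flip: of_nat_mult)
    then have e1: "6 * (int x + k) = (6 * int x + 1) + int p" and e2: "6 * (int x - k) = (6 * int x - 1) - int p"
      by (simp_all add: algebra_simps)
    have "int p dvd 6 * (int x + k) \<longleftrightarrow> int p dvd 6 * int x + 1" unfolding e1 by (rule dvd_shift(1))
    moreover have "int p dvd 6 * (int x - k) \<longleftrightarrow> int p dvd 6 * int x - 1" unfolding e2 by (rule dvd_shift(2))
    ultimately show ?thesis using c1 c2 unfolding k_def by blast
  qed
qed

lemma small_factor:
  fixes N x :: nat
  assumes "x > 0" "N = 6 * x - 1 \<or> N = 6 * x + 1" "\<not> prime N"
  shows "\<exists>q. prime q \<and> 5 \<le> q \<and> q < 6 * x - 1 \<and> q dvd N"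
proof -
  have N1: "N > 1" using assms by auto
  then obtain d where d: "d dvd N" "d \<noteq> 1" "d \<noteq> N" using assms(3) prime_nat_iff by auto
  then obtain e where e: "N = d * e" by (auto elim: dvdE)
  have "e \<noteq> 1" using e d by auto
  moreover have "e \<noteq> 0" using e N1 by (cases "e = 0") auto
  ultimately have "e \<ge> 2" by linarith
  then have "d * 2 \<le> d * e" by (rule mult_le_mono2)
  then have "2 * d \<le> N" using e by simp
  have "d \<noteq> 1" using d by simp
  then obtain q where q: "prime q" "q dvd d" using prime_factor_nat by blast
  have "d > 0" using e N1 by (cases "d = 0") auto
  then have "q \<le> d" using q dvd_imp_le by blast
  have qN: "q dvd N" using q d dvd_trans by blast
  have "\<not> 2 dvd N" using assms(2) assms(1) by presburger
  then have "\<not> 2 dvd q" using qN dvd_trans by blast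
  have "\<not> 3 dvd N" using assms(2) assms(1) by presburger
  then have "q \<noteq> 3" using qN by blast
  have "q \<ge> 2" using q prime_ge_2_nat by blast
  then have "q \<ge> 5" using \<open>\<not> 2 dvd q\<close> \<open>q \<noteq> 3\<close> by presburger
  moreover have "q < 6 * x - 1" using \<open>q \<le> d\<close> \<open>2 * d \<le> N\<close> assms(1,2) by linarith
  ultimately show ?thesis using q qN by blast
qed

theorem theorem1:
  fixes x :: nat
  assumes "x > 0"
  shows "(prime (6 * x - 1) \<and> prime (6 * x + 1)) \<longleftrightarrow>
    \<not> (\<exists>p::nat. prime p \<and> 5 \<le> p \<and> p < 6 * x - 1 \<and>
        ([int x = - int (kappa p)] (mod int p) \<or> [int x = int (kappa p)] (mod int p)))"
proof
  assume pr: "prime (6 * x - 1) \<and> prime (6 * x + 1)"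
  show "\<not> (\<exists>p::nat. prime p \<and> 5 \<le> p \<and> p < 6 * x - 1 \<and>
        ([int x = - int (kappa p)] (mod int p) \<or> [int x = int (kappa p)] (mod int p)))"
  proof
    assume "\<exists>p::nat. prime p \<and> 5 \<le> p \<and> p < 6 * x - 1 \<and>
        ([int x = - int (kappa p)] (mod int p) \<or> [int x = int (kappa p)] (mod int p))"
    then obtain p where p: "prime p" "5 \<le> p" "p < 6 * x - 1"
      "[int x = - int (kappa p)] (mod int p) \<or> [int x = int (kappa p)] (mod int p)" by blast
    then have "int p dvd 6 * int x - 1 \<or> int p dvd 6 * int x + 1" using key[OF p(1,2)] by blast
    moreover have "int (6 * x - 1) = 6 * int x - 1" using assms by simp
    moreover have "int (6 * x + 1) = 6 * int x + 1" by simp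
    ultimately have "p dvd 6 * x - 1 \<or> p dvd 6 * x + 1" by (metis int_dvd_int_iff)
    then have "p = 1 \<or> p = 6 * x - 1 \<or> p = 6 * x + 1" using pr prime_nat_iff by blast
    then show False using p by auto
  qed
next
  assume H: "\<not> (\<exists>p::nat. prime p \<and> 5 \<le> p \<and> p < 6 * x - 1 \<and>
        ([int x = - int (kappa p)] (mod int p) \<or> [int x = int (kappa p)] (mod int p)))"
  have "prime N" if N: "N = 6 * x - 1 \<or> N = 6 * x + 1" for N
  proof (rule ccontr)
    assume "\<not> prime N"
    then obtain q where q: "prime q" "5 \<le> q" "q < 6 * x - 1" "q dvd N"
      using small_factor[OF assms N] by blast
    have "int N = 6 * int x - 1 \<or> int N = 6 * int x + 1" using N assms by auto
    then have "int q dvd 6 * int x - 1 \<or> int q dvd 6 * int x + 1" using q(4)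
      by (metis int_dvd_int_iff)
    then show False using key[OF q(1,2)] H q by blast
  qed
  then show "prime (6 * x - 1) \<and> prime (6 * x + 1)" by blast
qed

end
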